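(* Let $G$ be a group satisfying the law $[x^2,y^2]=1$ (i.e. $[g^2,h^2]=1$ for all $g,h\in G$), and suppose the Klein bottle group $K=\langle a,b\mid b^{-1}ab=a^{-1}\rangle$ is a subgroup of $G$. Then every element of the normal closure $\langle\langle b^2\rangle\rangle$ of $b^2$ in $G$ commutes with every element of $K$.
   Context: $[x,y]=x^{-1}y^{-1}xy$. The normal closure $\langle\langle X\rangle\rangle$ of a subset $X$ of $G$ is the smallest normal subgroup of $G$ containing $X$. *)

theory Defs
  imports "HOL-Algebra.Algebra"
begin

definition commutator :: "('a, 'b) monoid_scheme \<Rightarrow> 'a \<Rightarrow> 'a \<Rightarrow> 'a" where
  "commutator G x y = inv\<^bsub>G\<^esub> x \<otimes>\<^bsub>G\<^esub> inv\<^bsub>G\<^esub> y \<otimes>\<^bsub>G\<^esub> x \<otimes>\<^bsub>G\<^esub> y"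

definition normal_closure :: "('a, 'b) monoid_scheme \<Rightarrow> 'a set \<Rightarrow> 'a set" where
  "normal_closure Gr S = {x. \<forall>H. normal H Gr \<and> S \<subseteq> H \<longrightarrow> x \<in> H}"

text \<open>The Klein bottle group <a,b | b^-1 a b = a^-1>, realised concretely by its
  normal form a^m b^n, i.e. the semidirect product Z \<rtimes> Z on pairs (m,n) with
  (m,n)(m',n') = (m + (-1)^n m', n + n'); a = (1,0), b = (0,1).\<close>
definition klein_group :: "(int \<times> int) monoid" where
  "klein_group = \<lparr> carrier = UNIV,
     monoid.mult = (\<lambda>(m, n) (m', n'). (m + (if even n then m' else - m'), n + n')),
     one = (0, 0) \<rparr>"

definition klein_a :: "int \<times> int" where "klein_a = (1, 0)"
definition klein_b :: "int \<times> int" where "klein_b = (0, 1)"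

end

theory Submission
  imports Defs
begin

context group
begin

lemma cm_mult: "\<lbrakk>a \<in> carrier G; b \<in> carrier G; c \<in> carrier G; a \<otimes> b = b \<otimes> a; a \<otimes> c = c \<otimes> a\<rbrakk>
  \<Longrightarrow> a \<otimes> (b \<otimes> c) = (b \<otimes> c) \<otimes> a"
proof -
  assume h: "a \<in> carrier G" "b \<in> carrier G" "c \<in> carrier G" "a \<otimes> b = b \<otimes> a" "a \<otimes> c = c \<otimes> a"
  have "a \<otimes> (b \<otimes> c) = (a \<otimes> b) \<otimes> c" using h(1-3) by (simp add: m_assoc)
  also have "\<dots> = (b \<otimes> a) \<otimes> c" by (simp only: h(4))
  also have "\<dots> = b \<otimes> (a \<otimes> c)" using h(1-3) by (simp add: m_assoc)
  also have "\<dots> = b \<otimes> (c \<otimes> a)" by (simp only: h(5))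
  also have "\<dots> = (b \<otimes> c) \<otimes> a" using h(1-3) by (simp add: m_assoc)
  finally show ?thesis .
qed

lemma cm_inv: "\<lbrakk>a \<in> carrier G; b \<in> carrier G; a \<otimes> b = b \<otimes> a\<rbrakk>
  \<Longrightarrow> a \<otimes> inv b = inv b \<otimes> a"
proof -
  assume h: "a \<in> carrier G" "b \<in> carrier G" "a \<otimes> b = b \<otimes> a"
  have "a \<otimes> inv b = inv b \<otimes> (b \<otimes> a) \<otimes> inv b" using h(1,2) by (simp add: m_assoc[symmetric])
  also have "\<dots> = inv b \<otimes> (a \<otimes> b) \<otimes> inv b" by (simp only: h(3))
  also have "\<dots> = inv b \<otimes> a \<otimes> (b \<otimes> inv b)" using h(1,2) by (simp only: m_assoc inv_closed m_closed)
  also have "\<dots> = inv b \<otimes> a" using h(1,2) by simp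
  finally show ?thesis .
qed

lemma conj_mult: "\<lbrakk>t \<in> carrier G; a \<in> carrier G; b \<in> carrier G\<rbrakk> \<Longrightarrow>
   t \<otimes> (a \<otimes> b) \<otimes> inv t = (t \<otimes> a \<otimes> inv t) \<otimes> (t \<otimes> b \<otimes> inv t)"
proof -
  assume h: "t \<in> carrier G" "a \<in> carrier G" "b \<in> carrier G"
  have "(t \<otimes> a \<otimes> inv t) \<otimes> (t \<otimes> b \<otimes> inv t) = t \<otimes> a \<otimes> (inv t \<otimes> t) \<otimes> b \<otimes> inv t"
    using h by (simp only: m_assoc inv_closed m_closed)
  thus ?thesis using h by (simp add: m_assoc)
qed

lemma conj_mult': "\<lbrakk>t \<in> carrier G; a \<in> carrier G; b \<in> carrier G\<rbrakk> \<Longrightarrow>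
   inv t \<otimes> (a \<otimes> b) \<otimes> t = (inv t \<otimes> a \<otimes> t) \<otimes> (inv t \<otimes> b \<otimes> t)"
  using conj_mult[of "inv t" a b] by simp

lemma conj_inv: "\<lbrakk>t \<in> carrier G; a \<in> carrier G\<rbrakk> \<Longrightarrow>
   t \<otimes> inv a \<otimes> inv t = inv (t \<otimes> a \<otimes> inv t)"
  by (simp add: inv_mult_group m_assoc)

lemma conj_inv': "\<lbrakk>t \<in> carrier G; a \<in> carrier G\<rbrakk> \<Longrightarrow>
   inv t \<otimes> inv a \<otimes> t = inv (inv t \<otimes> a \<otimes> t)"
  using conj_inv[of "inv t" a] by simp

lemma conj_conj: "\<lbrakk>g \<in> carrier G; x \<in> carrier G; h \<in> carrier G\<rbrakk> \<Longrightarrow>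
   inv g \<otimes> (x \<otimes> h \<otimes> inv x) \<otimes> g = inv (inv x \<otimes> g) \<otimes> h \<otimes> (inv x \<otimes> g)"
  by (simp add: inv_mult_group m_assoc)

lemma conj_back: "\<lbrakk>g \<in> carrier G; a \<in> carrier G; b \<in> carrier G;
   a \<otimes> (g \<otimes> b \<otimes> inv g) = (g \<otimes> b \<otimes> inv g) \<otimes> a\<rbrakk> \<Longrightarrow>
   (inv g \<otimes> a \<otimes> g) \<otimes> b = b \<otimes> (inv g \<otimes> a \<otimes> g)"
proof -
  assume h: "g \<in> carrier G" "a \<in> carrier G" "b \<in> carrier G"
    and e: "a \<otimes> (g \<otimes> b \<otimes> inv g) = (g \<otimes> b \<otimes> inv g) \<otimes> a"
  have "inv g \<otimes> (a \<otimes> (g \<otimes> b \<otimes> inv g)) \<otimes> g = inv g \<otimes> ((g \<otimes> b \<otimes> inv g) \<otimes> a) \<otimes> g"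
    by (simp only: e)
  moreover have "inv g \<otimes> (a \<otimes> (g \<otimes> b \<otimes> inv g)) \<otimes> g = inv g \<otimes> a \<otimes> (g \<otimes> b) \<otimes> (inv g \<otimes> g)"
    using h by (simp only: m_assoc inv_closed m_closed)
  moreover have "inv g \<otimes> ((g \<otimes> b \<otimes> inv g) \<otimes> a) \<otimes> g = (inv g \<otimes> g) \<otimes> b \<otimes> (inv g \<otimes> a \<otimes> g)"
    using h by (simp only: m_assoc inv_closed m_closed)
  ultimately show ?thesis using h by (simp add: m_assoc)
qed

lemma comm_sq:
  assumes law: "\<forall>g\<in>carrier G. \<forall>h\<in>carrier G. commutator G (g [^] (2::nat)) (h [^] (2::nat)) = \<one>"
    and u: "u \<in> carrier G" and v: "v \<in> carrier G"
  shows "u [^] (2::nat) \<otimes> v [^] (2::nat) = v [^] (2::nat) \<otimes> u [^] (2::nat)"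
proof -
  define p where "p = u [^] (2::nat)"
  define q where "q = v [^] (2::nat)"
  have pc: "p \<in> carrier G" and qc: "q \<in> carrier G" using u v by (auto simp: p_def q_def)
  have "inv p \<otimes> inv q \<otimes> p \<otimes> q = \<one>" using law u v unfolding commutator_def p_def q_def by blast
  hence "(inv p \<otimes> inv q) \<otimes> (p \<otimes> q) = \<one>" using pc qc by (simp add: m_assoc)
  hence "inv (p \<otimes> q) = inv p \<otimes> inv q" using pc qc by (metis inv_equality inv_closed m_closed)
  hence "inv (p \<otimes> q) = inv (q \<otimes> p)" using pc qc by (simp add: inv_mult_group)
  hence "p \<otimes> q = q \<otimes> p" using pc qc by (metis inv_inv m_closed)
  thus ?thesis by (simp add: p_def q_def)
qed

lemma sq_conj:
  assumes law: "\<forall>g\<in>carrier G. \<forall>h\<in>carrier G. commutator G (g [^] (2::nat)) (h [^] (2::nat)) = \<one>"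
    and x: "x \<in> carrier G" and z: "z \<in> carrier G"
  shows "x [^] (2::nat) \<otimes> (z \<otimes> x \<otimes> inv z) = (z \<otimes> x \<otimes> inv z) \<otimes> x [^] (2::nat)"
proof -
  have sq: "\<And>w. w \<in> carrier G \<Longrightarrow> w [^] (2::nat) = w \<otimes> w"
    by (simp add: numeral_2_eq_2)
  have "x [^] (2::nat) \<otimes> (x \<otimes> z) [^] (2::nat) = (x \<otimes> z) [^] (2::nat) \<otimes> x [^] (2::nat)"
    using comm_sq[OF law x] x z by simp
  hence "x \<otimes> ((x \<otimes> x) \<otimes> (z \<otimes> x \<otimes> z)) = x \<otimes> ((z \<otimes> x \<otimes> z) \<otimes> (x \<otimes> x))"
    using x z by (simp add: sq m_assoc)
  hence e1: "(x \<otimes> x) \<otimes> (z \<otimes> x \<otimes> z) = (z \<otimes> x \<otimes> z) \<otimes> (x \<otimes> x)"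
    using x z by simp
  have e2: "(x \<otimes> x) \<otimes> (inv z \<otimes> inv z) = (inv z \<otimes> inv z) \<otimes> (x \<otimes> x)"
    using comm_sq[OF law x, of "inv z"] x z by (simp add: sq)
  have "(x \<otimes> x) \<otimes> ((z \<otimes> x \<otimes> z) \<otimes> (inv z \<otimes> inv z)) = ((z \<otimes> x \<otimes> z) \<otimes> (inv z \<otimes> inv z)) \<otimes> (x \<otimes> x)"
    by (rule cm_mult) (use x z e1 e2 in auto)
  moreover have "(z \<otimes> x \<otimes> z) \<otimes> (inv z \<otimes> inv z) = z \<otimes> x \<otimes> inv z"
  proof -
    have "(z \<otimes> x \<otimes> z) \<otimes> (inv z \<otimes> inv z) = z \<otimes> x \<otimes> (z \<otimes> inv z) \<otimes> inv z"
      using x z by (simp only: m_assoc inv_closed m_closed)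
    thus ?thesis using x z by simp
  qed
  ultimately show ?thesis using x by (simp add: sq)
qed

end

lemma klein_mult: "(m, n) \<otimes>\<^bsub>klein_group\<^esub> (m', n') = (m + (if even n then m' else - m'), n + n')"
  by (simp add: klein_group_def)

theorem mainTheorem4:
  fixes G (structure) and \<phi> :: "int \<times> int \<Rightarrow> 'a"
  assumes "group G"
    and law: "\<forall>g\<in>carrier G. \<forall>h\<in>carrier G. commutator G (g [^] (2::nat)) (h [^] (2::nat)) = \<one>"
    and hom: "\<phi> \<in> hom klein_group G"
    and inj: "inj_on \<phi> (carrier klein_group)"
  shows "\<forall>x\<in>normal_closure G {\<phi> klein_b [^] (2::nat)}. \<forall>k\<in>\<phi> ` carrier klein_group.
           x \<otimes> k = k \<otimes> x"
proof -
  interpret group G by fact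
  have cK: "carrier klein_group = UNIV" by (simp add: klein_group_def)
  have phic: "\<phi> p \<in> carrier G" for p using hom cK unfolding hom_def by (auto simp del: split_paired_All)
  have phim: "\<phi> (p \<otimes>\<^bsub>klein_group\<^esub> q) = \<phi> p \<otimes> \<phi> q" for p q
    using hom_mult[OF hom] cK by auto
  have phi1: "\<phi> (0,0) = \<one>"
  proof -
    have "\<phi> (0,0) \<otimes> \<phi> (0,0) = \<phi> (0,0)" using phim[of "(0,0)" "(0,0)"] by (simp add: klein_mult)
    thus ?thesis using phic by (metis l_cancel_one')
  qed
  define \<alpha> where "\<alpha> = \<phi> (1,0)"
  define \<beta> where "\<beta> = \<phi> (0,1)"
  define Xb where "Xb = \<beta> [^] (2::nat)"
  have ac: "\<alpha> \<in> carrier G" and bc: "\<beta> \<in> carrier G" using phic by (auto simp: \<alpha>_def \<beta>_def)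
  have Xc: "Xb \<in> carrier G" using bc by (simp add: Xb_def)
  have sq: "\<And>w. w \<in> carrier G \<Longrightarrow> w [^] (2::nat) = w \<otimes> w"
    by (simp add: numeral_2_eq_2)
  have X2: "Xb = (\<phi> (1,1)) [^] (2::nat)"
  proof -
    have "\<phi> (1,1) \<otimes> \<phi> (1,1) = \<phi> (0,2)" using phim[of "(1,1)" "(1,1)"] by (simp add: klein_mult)
    moreover have "\<beta> \<otimes> \<beta> = \<phi> (0,2)" using phim[of "(0,1)" "(0,1)"] by (simp add: klein_mult \<beta>_def)
    ultimately show ?thesis using phic bc by (simp add: Xb_def sq)
  qed
  define S where "S = {k \<in> carrier G. \<forall>t\<in>carrier G. Xb \<otimes> (t \<otimes> k \<otimes> inv t) = (t \<otimes> k \<otimes> inv t) \<otimes> Xb}"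
  have S_mult: "a \<otimes> b \<in> S" if "a \<in> S" "b \<in> S" for a b
  proof -
    have ac': "a \<in> carrier G" and bc': "b \<in> carrier G" using that by (auto simp: S_def)
    have "Xb \<otimes> (t \<otimes> (a \<otimes> b) \<otimes> inv t) = (t \<otimes> (a \<otimes> b) \<otimes> inv t) \<otimes> Xb" if t: "t \<in> carrier G" for t
    proof -
      have e1: "Xb \<otimes> (t \<otimes> a \<otimes> inv t) = (t \<otimes> a \<otimes> inv t) \<otimes> Xb" using \<open>a \<in> S\<close> t by (simp add: S_def)
      have e2: "Xb \<otimes> (t \<otimes> b \<otimes> inv t) = (t \<otimes> b \<otimes> inv t) \<otimes> Xb" using \<open>b \<in> S\<close> t by (simp add: S_def)
      show ?thesis unfolding conj_mult[OF t ac' bc']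
        by (rule cm_mult) (use e1 e2 t ac' bc' Xc in auto)
    qed
    thus ?thesis using ac' bc' by (simp add: S_def)
  qed
  have S_inv: "inv a \<in> S" if "a \<in> S" for a
  proof -
    have ac': "a \<in> carrier G" using that by (auto simp: S_def)
    have "Xb \<otimes> (t \<otimes> inv a \<otimes> inv t) = (t \<otimes> inv a \<otimes> inv t) \<otimes> Xb" if t: "t \<in> carrier G" for t
    proof -
      have e1: "Xb \<otimes> (t \<otimes> a \<otimes> inv t) = (t \<otimes> a \<otimes> inv t) \<otimes> Xb" using \<open>a \<in> S\<close> t by (simp add: S_def)
      show ?thesis unfolding conj_inv[OF t ac']
        by (rule cm_inv) (use e1 t ac' Xc in auto)
    qed
    thus ?thesis using ac' by (simp add: S_def)
  qed
  have bS: "\<beta> \<in> S" using sq_conj[OF law bc] bc by (simp add: S_def Xb_def)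
  have abS: "\<phi> (1,1) \<in> S" using sq_conj[OF law phic] phic X2 by (simp add: S_def)
  have aS: "\<alpha> \<in> S"
  proof -
    have "\<phi> (1,1) = \<alpha> \<otimes> \<beta>" using phim[of "(1,0)" "(0,1)"] by (simp add: klein_mult \<alpha>_def \<beta>_def)
    hence "\<alpha> = \<phi> (1,1) \<otimes> inv \<beta>" using ac bc by (simp add: m_assoc)
    thus ?thesis using S_mult S_inv abS bS by simp
  qed
  have am: "\<phi> (-1,0) = inv \<alpha>"
  proof -
    have "\<phi> (-1,0) \<otimes> \<alpha> = \<one>" using phim[of "(-1,0)" "(1,0)"] phi1 by (simp add: klein_mult \<alpha>_def)
    thus ?thesis using phic ac by (metis inv_equality)
  qed
  have bm: "\<phi> (0,-1) = inv \<beta>"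
  proof -
    have "\<phi> (0,-1) \<otimes> \<beta> = \<one>" using phim[of "(0,-1)" "(0,1)"] phi1 by (simp add: klein_mult \<beta>_def)
    thus ?thesis using phic bc by (metis inv_equality)
  qed
  have mS: "\<phi> (m, 0) \<in> S" for m :: int
  proof (induction m rule: int_induct[where k=0])
    case base
    have "\<alpha> \<otimes> inv \<alpha> \<in> S" by (rule S_mult[OF aS S_inv[OF aS]])
    then show ?case using phi1 ac by simp
  next
    case (step1 i)
    have "\<phi> (i+1, 0) = \<phi> (i,0) \<otimes> \<alpha>" using phim[of "(i,0)" "(1,0)"] by (simp add: klein_mult \<alpha>_def)
    then show ?case using step1 S_mult aS by simp
  next
    case (step2 i)
    have "\<phi> (i-1, 0) = \<phi> (i,0) \<otimes> \<phi> (-1,0)" using phim[of "(i,0)" "(-1,0)"] by (simp add: klein_mult)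
    then show ?case using step2 S_mult S_inv aS am by simp
  qed
  have nS: "\<phi> (0, n) \<in> S" for n :: int
  proof (induction n rule: int_induct[where k=0])
    case base then show ?case using mS by simp
  next
    case (step1 i)
    have "\<phi> (0, i+1) = \<phi> (0,i) \<otimes> \<beta>" using phim[of "(0,i)" "(0,1)"] by (cases "even i") (simp_all add: klein_mult \<beta>_def)
    then show ?case using step1 S_mult bS by simp
  next
    case (step2 i)
    have "\<phi> (0, i-1) = \<phi> (0,i) \<otimes> \<phi> (0,-1)" using phim[of "(0,i)" "(0,-1)"] by (cases "even i") (simp_all add: klein_mult)
    then show ?case using step2 S_mult S_inv bS bm by simp
  qed
  have allS: "\<phi> p \<in> S" for p
  proof (cases p)
    case (Pair m n)
    have "\<phi> (m,n) = \<phi> (m,0) \<otimes> \<phi> (0,n)" using phim[of "(m,0)" "(0,n)"] by (simp add: klein_mult)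
    thus ?thesis using Pair mS nS S_mult by simp
  qed
  define H where "H = {x \<in> carrier G. \<forall>g\<in>carrier G. \<forall>p. (inv g \<otimes> x \<otimes> g) \<otimes> \<phi> p = \<phi> p \<otimes> (inv g \<otimes> x \<otimes> g)}"
  have hH: "(inv g \<otimes> x \<otimes> g) \<otimes> \<phi> p = \<phi> p \<otimes> (inv g \<otimes> x \<otimes> g)" if "x \<in> H" "g \<in> carrier G" for x g p
    using that unfolding H_def by (auto simp del: split_paired_All)
  have Hsub: "subgroup H G"
  proof (rule subgroupI)
    show "H \<subseteq> carrier G" by (auto simp: H_def)
    show "H \<noteq> {}"
    proof -
      have "\<one> \<in> H" using phic by (auto simp: H_def)
      thus ?thesis by blast
    qed
  next
    fix a assume a: "a \<in> H"
    have ac': "a \<in> carrier G" using a by (simp add: H_def)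
    have "(inv g \<otimes> inv a \<otimes> g) \<otimes> \<phi> p = \<phi> p \<otimes> (inv g \<otimes> inv a \<otimes> g)" if g: "g \<in> carrier G" for g p
    proof -
      have e: "\<phi> p \<otimes> (inv g \<otimes> a \<otimes> g) = (inv g \<otimes> a \<otimes> g) \<otimes> \<phi> p" using hH[OF a g, symmetric] .
      have "\<phi> p \<otimes> inv (inv g \<otimes> a \<otimes> g) = inv (inv g \<otimes> a \<otimes> g) \<otimes> \<phi> p"
        by (rule cm_inv) (use e g ac' phic in auto)
      thus ?thesis unfolding conj_inv'[OF g ac'] by simp
    qed
    thus "inv a \<in> H" using ac' by (simp add: H_def)
  next
    fix a b assume a: "a \<in> H" and b: "b \<in> H"
    have ac': "a \<in> carrier G" and bc': "b \<in> carrier G" using a b by (auto simp: H_def)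
    have "(inv g \<otimes> (a \<otimes> b) \<otimes> g) \<otimes> \<phi> p = \<phi> p \<otimes> (inv g \<otimes> (a \<otimes> b) \<otimes> g)" if g: "g \<in> carrier G" for g p
    proof -
      have e1: "\<phi> p \<otimes> (inv g \<otimes> a \<otimes> g) = (inv g \<otimes> a \<otimes> g) \<otimes> \<phi> p" using hH[OF a g, symmetric] .
      have e2: "\<phi> p \<otimes> (inv g \<otimes> b \<otimes> g) = (inv g \<otimes> b \<otimes> g) \<otimes> \<phi> p" using hH[OF b g, symmetric] .
      have "\<phi> p \<otimes> ((inv g \<otimes> a \<otimes> g) \<otimes> (inv g \<otimes> b \<otimes> g)) = ((inv g \<otimes> a \<otimes> g) \<otimes> (inv g \<otimes> b \<otimes> g)) \<otimes> \<phi> p"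
        by (rule cm_mult) (use e1 e2 g ac' bc' phic in auto)
      thus ?thesis unfolding conj_mult'[OF g ac' bc'] by simp
    qed
    thus "a \<otimes> b \<in> H" using ac' bc' by (simp add: H_def)
  qed
  have Hnorm: "H \<lhd> G"
  proof -
    have "x \<otimes> h \<otimes> inv x \<in> H" if x: "x \<in> carrier G" and h: "h \<in> H" for x h
    proof -
      have hc: "h \<in> carrier G" using h by (simp add: H_def)
      have "(inv g \<otimes> (x \<otimes> h \<otimes> inv x) \<otimes> g) \<otimes> \<phi> p = \<phi> p \<otimes> (inv g \<otimes> (x \<otimes> h \<otimes> inv x) \<otimes> g)" if g: "g \<in> carrier G" for g p
      proof -
        have gx: "inv x \<otimes> g \<in> carrier G" using g x by simp
        show ?thesis unfolding conj_conj[OF g x hc] by (rule hH[OF h gx])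
      qed
      thus ?thesis using x hc by (simp add: H_def)
    qed
    thus ?thesis using Hsub normal_inv_iff by blast
  qed
  have XH: "Xb \<in> H"
  proof -
    have "(inv g \<otimes> Xb \<otimes> g) \<otimes> \<phi> p = \<phi> p \<otimes> (inv g \<otimes> Xb \<otimes> g)" if g: "g \<in> carrier G" for g p
      by (rule conj_back) (use allS[of p] g Xc phic in \<open>auto simp: S_def\<close>)
    thus ?thesis using Xc by (simp add: H_def)
  qed
  have "normal_closure G {\<phi> klein_b [^] (2::nat)} \<subseteq> H"
    using Hnorm XH unfolding normal_closure_def Xb_def \<beta>_def klein_b_def by auto
  moreover have "x \<otimes> k = k \<otimes> x" if "x \<in> H" "k \<in> \<phi> ` carrier klein_group" for x k
    using that by (auto simp: H_def dest!: bspec[where x=\<one>])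
  ultimately show ?thesis by blast
qed

end
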